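(* Let $[n]$ be a set of items, $\boldsymbol\theta=(\boldsymbol\theta_1,\dots,\boldsymbol\theta_n)$ a vector of independent non-negative real random variables, $f:\mathbb{R}^n_{\ge0}\to\mathbb{R}_{\ge0}$ a monotone submodular value function, and $k\in[n]$. Let $\pi$ be an optimal adaptive policy selecting $k$ items, and let $x_i$ be the probability that item $i$ is selected by $\pi$. Let $\hat{\boldsymbol\theta}$ be a random vector with the same distribution as $\boldsymbol\theta$ and independent of $\boldsymbol\theta$. Then for every $S\subseteq[n]$, $$\mathbb{E}_{\boldsymbol\theta,\hat{\boldsymbol\theta}}\big[f\big(\boldsymbol\theta(S)\vee\hat{\boldsymbol\theta}(U_{\hat{\boldsymbol\theta},k}(\pi)\cup S)\big)\big]\le \mathbb{E}_{\boldsymbol\theta,\hat{\boldsymbol\theta}}\big[f(\boldsymbol\theta(S)\vee\hat{\boldsymbol\theta}(S))\big]+\sum_{i\in[n]\setminus S}x_i\,\mathbb{E}_{\boldsymbol\theta}\big[\Delta(i\mid\boldsymbol\theta(S))\big].$$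
   Context: A monotone submodular value function $f$ is non-decreasing in each coordinate and satisfies $f(x\vee y)+f(x\wedge y)\le f(x)+f(y)$ for all $x,y\in\mathbb{R}^n_{\ge0}$ ($\vee,\wedge$ componentwise max/min). For $S\subseteq[n]$, $\boldsymbol\theta(S)$ is the random vector with $i$-th coordinate $\boldsymbol\theta_i$ if $i\in S$ and $0$ otherwise (observing it also reveals $S$); similarly for $\hat{\boldsymbol\theta}(S)$. An adaptive policy $\pi$ starts with $U=\emptyset$ and for $k$ steps observes the partial state $\xi=\boldsymbol\theta(U)$ and adds an item $\pi(\xi)\in[n]\setminus U$ to $U$; the final set is $U_{\boldsymbol\theta,k}(\pi)$, and $U_{\hat{\boldsymbol\theta},k}(\pi)$ is the set obtained when the policy observes partial states of $\hat{\boldsymbol\theta}$ instead. $\pi$ is optimal if it maximizes $\mathbb{E}[f(\boldsymbol\theta(U_{\boldsymbol\theta,k}(\pi)))]$. For $i\in[n]$, $\mathbf e^i$ is a random vector (independent of everything else) whose $i$-th coordinate has the distribution of $\boldsymbol\theta_i$ and whose other coordinates are $0$; for a partial state $\xi$, $\Delta(i\mid\xi):=\mathbb{E}_{\mathbf e^i}[f(\xi\vee\mathbf e^i)-f(\xi)]$. *)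

theory Defs
  imports "HOL-Probability.Probability"
begin

text \<open>Items are the elements of a finite type 'n (so [n] = UNIV). Value vectors are
  functions 'n => real; the product sigma-algebra is PiM UNIV (\<lambda>_. borel).\<close>

definition restr :: "'n set \<Rightarrow> ('n \<Rightarrow> real) \<Rightarrow> ('n \<Rightarrow> real)" where
  "restr S v = (\<lambda>i. if i \<in> S then v i else 0)"

text \<open>A (deterministic) adaptive policy maps the partial state (U, theta(U)) to the next item.
  run pi theta j is the set selected after j steps.\<close>
fun run :: "('n set \<Rightarrow> ('n \<Rightarrow> real) \<Rightarrow> 'n) \<Rightarrow> ('n \<Rightarrow> real) \<Rightarrow> nat \<Rightarrow> 'n set" where
  "run p \<theta> 0 = {}"
| "run p \<theta> (Suc j) = insert (p (run p \<theta> j) (restr (run p \<theta> j) \<theta>)) (run p \<theta> j)"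

definition Theta :: "('n::finite \<Rightarrow> real measure) \<Rightarrow> ('n \<Rightarrow> real) measure" where
  "Theta D = PiM UNIV D"

definition admissible_policy :: "nat \<Rightarrow> ('n set \<Rightarrow> ('n \<Rightarrow> real) \<Rightarrow> 'n) \<Rightarrow> bool" where
  "admissible_policy k p \<longleftrightarrow>
     (\<forall>U \<xi>. card U < k \<longrightarrow> p U \<xi> \<notin> U) \<and>
     (\<forall>U. p U \<in> measurable (PiM UNIV (\<lambda>_. borel)) (count_space UNIV))"

definition policy_value ::
  "('n::finite \<Rightarrow> real measure) \<Rightarrow> (('n \<Rightarrow> real) \<Rightarrow> real) \<Rightarrow> nat
     \<Rightarrow> ('n set \<Rightarrow> ('n \<Rightarrow> real) \<Rightarrow> 'n) \<Rightarrow> ennreal" where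
  "policy_value D f k p = (\<integral>\<^sup>+ \<theta>. ennreal (f (restr (run p \<theta> k) \<theta>)) \<partial>Theta D)"

definition optimal_policy ::
  "('n::finite \<Rightarrow> real measure) \<Rightarrow> (('n \<Rightarrow> real) \<Rightarrow> real) \<Rightarrow> nat
     \<Rightarrow> ('n set \<Rightarrow> ('n \<Rightarrow> real) \<Rightarrow> 'n) \<Rightarrow> bool" where
  "optimal_policy D f k p \<longleftrightarrow> admissible_policy k p \<and>
     (\<forall>p'. admissible_policy k p' \<longrightarrow> policy_value D f k p' \<le> policy_value D f k p)"

definition sel_prob ::
  "('n::finite \<Rightarrow> real measure) \<Rightarrow> nat \<Rightarrow> ('n set \<Rightarrow> ('n \<Rightarrow> real) \<Rightarrow> 'n) \<Rightarrow> 'n \<Rightarrow> ennreal" where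
  "sel_prob D k p i = emeasure (Theta D) {\<theta> \<in> space (Theta D). i \<in> run p \<theta> k}"

definition Delta ::
  "('n \<Rightarrow> real measure) \<Rightarrow> (('n \<Rightarrow> real) \<Rightarrow> real) \<Rightarrow> 'n \<Rightarrow> ('n \<Rightarrow> real) \<Rightarrow> ennreal" where
  "Delta D f i \<xi> = (\<integral>\<^sup>+ t. ennreal (f (sup \<xi> (\<lambda>j. if j = i then t else 0)) - f \<xi>) \<partial>D i)"

end

theory Submission
  imports Defs
begin

lemma space_Theta: "(\<And>i. sets (D i) = sets borel) \<Longrightarrow> space (Theta D) = UNIV"
proof -
  assume a: "\<And>i. sets (D i) = sets borel"
  have "\<And>i. space (D i) = UNIV" using sets_eq_imp_space_eq[OF a] by simp
  then show ?thesis by (simp add: Theta_def space_PiM)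
qed

lemma sets_Theta: "(\<And>i. sets (D i) = sets borel) \<Longrightarrow> sets (Theta D) = sets (PiM UNIV (\<lambda>_. borel))"
  unfolding Theta_def by (rule sets_PiM_cong) auto

lemma restr_meas: "restr U \<in> measurable (PiM UNIV (\<lambda>_. borel)) (PiM UNIV (\<lambda>_. borel))"
  unfolding restr_def by (rule measurable_PiM_single') (auto simp: space_PiM)

lemma run_meas:
  assumes "\<And>U. p U \<in> measurable (PiM UNIV (\<lambda>_. borel)) (count_space UNIV)"
  shows "(\<lambda>\<theta>. run p \<theta> j) \<in> measurable (PiM UNIV (\<lambda>_. borel :: real measure)) (count_space (UNIV :: ('n::finite) set set))"
proof (induction j)
  case 0 then show ?case by simp
next
  case (Suc j)
  have "(\<lambda>\<theta>. (\<lambda>U \<theta>. insert (p U (restr U \<theta>)) U) (run p \<theta> j) \<theta>) \<in> measurable (PiM UNIV (\<lambda>_. borel)) (count_space UNIV)"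
  proof (rule measurable_compose_countable'[OF _ Suc])
    fix U :: "'n set"
    have "(\<lambda>\<theta>. p U (restr U \<theta>)) \<in> measurable (PiM UNIV (\<lambda>_. borel)) (count_space UNIV)"
      using measurable_comp[OF restr_meas assms] by (simp add: comp_def)
    then show "(\<lambda>\<theta>. insert (p U (restr U \<theta>)) U) \<in> measurable (PiM UNIV (\<lambda>_. borel)) (count_space UNIV)"
      using measurable_comp[of _ _ "count_space UNIV" "\<lambda>a. insert a U" "count_space UNIV"] by (simp add: comp_def)
  qed simp
  then show ?case by simp
qed

lemma run_mono: "j \<le> j' \<Longrightarrow> run p \<theta> j \<subseteq> run p \<theta> j'"
  by (induction j' rule: dec_induct) auto

lemma finite_run: "finite (run p \<theta> j)"
  by (induction j) auto

lemma run_card: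
  assumes "admissible_policy k p" "j \<le> k"
  shows "card (run p \<theta> j) = j"
  using assms(2)
proof (induction j)
  case (Suc j)
  then have "p (run p \<theta> j) (restr (run p \<theta> j) \<theta>) \<notin> run p \<theta> j"
    using assms(1) unfolding admissible_policy_def by auto
  then show ?case using Suc finite_run[of p \<theta> j] by simp
qed simp

lemma run_new:
  assumes "admissible_policy k p" "j < k"
  shows "p (run p \<theta> j) (restr (run p \<theta> j) \<theta>) \<notin> run p \<theta> j"
  using assms run_card[OF assms(1), of j \<theta>] unfolding admissible_policy_def by auto

lemma run_upd:
  assumes "i \<notin> run p \<theta> j"
  shows "run p (\<theta>(i := y)) j = run p \<theta> j"
  using assms
proof (induction j)
  case (Suc j)
  then have ij: "i \<notin> run p \<theta> j" by auto
  then have "restr (run p \<theta> j) (\<theta>(i := y)) = restr (run p \<theta> j) \<theta>"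
    by (auto simp: restr_def)
  then show ?case using Suc.IH[OF ij] by (simp del: fun_upd_apply)
qed simp

lemma vec_meas1: "(\<lambda>z. sup (restr S (fst z)) (restr T (snd z))) \<in> measurable (PiM UNIV (\<lambda>_. borel) \<Otimes>\<^sub>M PiM UNIV (\<lambda>_. borel)) (PiM UNIV (\<lambda>_. borel :: real measure))"
  unfolding restr_def sup_fun_def
  by (rule measurable_PiM_single') (auto simp: space_PiM)

lemma vec_meas2: "(\<lambda>z. sup (restr S (fst z)) (\<lambda>l. if l = i then snd z else 0)) \<in> measurable (PiM UNIV (\<lambda>_. borel) \<Otimes>\<^sub>M borel) (PiM UNIV (\<lambda>_. borel :: real measure))"
  unfolding restr_def sup_fun_def
  by (rule measurable_PiM_single') (auto simp: space_PiM)

lemma vec_meas3: "(\<lambda>\<theta>'. sup (restr S \<theta>) (restr T \<theta>')) \<in> measurable (PiM UNIV (\<lambda>_. borel)) (PiM UNIV (\<lambda>_. borel :: real measure))"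
  unfolding restr_def sup_fun_def
  by (rule measurable_PiM_single') (auto simp: space_PiM)

lemma ij_meas:
  assumes "\<And>U. p U \<in> measurable (PiM UNIV (\<lambda>_. borel)) (count_space UNIV)"
  shows "(\<lambda>\<theta>. p (run p \<theta> j) (restr (run p \<theta> j) \<theta>)) \<in> measurable (PiM UNIV (\<lambda>_. borel :: real measure)) (count_space (UNIV :: ('n::finite) set))"
proof (rule measurable_compose_countable'[OF _ run_meas[OF assms]])
  fix U :: "'n set"
  show "(\<lambda>\<theta>. p U (restr U \<theta>)) \<in> measurable (PiM UNIV (\<lambda>_. borel)) (count_space UNIV)"
    using measurable_comp[OF restr_meas assms] by (simp add: comp_def)
qed simp

lemma X_meas:
  fixes p :: "('n::finite) set \<Rightarrow> ('n \<Rightarrow> real) \<Rightarrow> 'n"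
  assumes "\<And>U. p U \<in> measurable (PiM UNIV (\<lambda>_. borel)) (count_space UNIV)"
  and "f \<in> borel_measurable (PiM UNIV (\<lambda>_. borel))"
  shows "(\<lambda>\<theta>'. f (sup (restr S \<theta>) (restr (run p \<theta>' j \<union> S) \<theta>'))) \<in> borel_measurable (PiM UNIV (\<lambda>_. borel :: real measure))"
proof (rule measurable_compose_countable'[OF _ run_meas[OF assms(1)]])
  fix U :: "'n set"
  show "(\<lambda>\<theta>'. f (sup (restr S \<theta>) (restr (U \<union> S) \<theta>'))) \<in> borel_measurable (PiM UNIV (\<lambda>_. borel))"
    using measurable_comp[OF vec_meas3 assms(2)] by (simp add: comp_def)
qed simp

context
  fixes D :: "'n::finite \<Rightarrow> real measure"
    and f :: "('n \<Rightarrow> real) \<Rightarrow> real"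
    and k :: nat
    and p :: "'n set \<Rightarrow> ('n \<Rightarrow> real) \<Rightarrow> 'n"
    and S :: "'n set"
  assumes prob: "\<And>i. prob_space (D i)"
    and sets_D: "\<And>i. sets (D i) = sets borel"
    and f_meas: "f \<in> borel_measurable (PiM UNIV (\<lambda>_. borel))"
    and f_sub: "\<forall>x y. (\<forall>i. 0 \<le> x i) \<longrightarrow> (\<forall>i. 0 \<le> y i) \<longrightarrow>
                      f (sup x y) + f (inf x y) \<le> f x + f y"
    and adm: "admissible_policy k p"
begin

lemma p_meas: "p U \<in> measurable (PiM UNIV (\<lambda>_. borel)) (count_space UNIV)"
  using adm unfolding admissible_policy_def by auto

lemma delta_anti:
  assumes "\<forall>l. 0 \<le> \<xi>0 l" "\<forall>l. \<xi>0 l \<le> \<xi> l" "\<xi>0 i = 0" "\<xi> i = 0" "0 \<le> t"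
  shows "f (\<xi>(i:=t)) - f \<xi> \<le> f (\<xi>0(i:=t)) - f \<xi>0"
proof -
  have s: "sup (\<xi>0(i:=t)) \<xi> = \<xi>(i:=t)"
    using assms by (auto simp: sup_fun_def sup_max max_def)
  have n: "inf (\<xi>0(i:=t)) \<xi> = \<xi>0"
    using assms by (auto simp: inf_fun_def inf_min min_def)
  have "f (sup (\<xi>0(i:=t)) \<xi>) + f (inf (\<xi>0(i:=t)) \<xi>) \<le> f (\<xi>0(i:=t)) + f \<xi>"
    using assms by (intro f_sub[rule_format]) (auto intro: order.trans)
  then show ?thesis unfolding s n by simp
qed

lemma psf: "product_sigma_finite D"
  unfolding product_sigma_finite_def
  using prob by (simp add: prob_space_imp_sigma_finite)

lemma sets_T: "sets (Theta D) = sets (PiM UNIV (\<lambda>_. borel))"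
  by (rule sets_Theta) (rule sets_D)

lemma space_T: "space (Theta D) = UNIV"
  by (rule space_Theta) (rule sets_D)

lemma Theta_meas_cong: "measurable (Theta D) N = measurable (PiM UNIV (\<lambda>_. borel)) N"
  by (rule measurable_cong_sets[OF sets_Theta[OF sets_D] refl])

lemma ij_upd:
  assumes "i \<notin> run p \<theta> j"
  shows "p (run p (\<theta>(i:=y)) j) (restr (run p (\<theta>(i:=y)) j) (\<theta>(i:=y))) = p (run p \<theta> j) (restr (run p \<theta> j) \<theta>)"
proof -
  have "restr (run p \<theta> j) (\<theta>(i := y)) = restr (run p \<theta> j) \<theta>"
    using assms by (auto simp: restr_def)
  then show ?thesis using run_upd[OF assms] by (simp del: fun_upd_apply)
qed

lemma key_step:
  assumes th: "\<forall>l. 0 \<le> \<theta> l" and j: "j < k" and i: "i \<notin> S"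
  shows "(\<integral>\<^sup>+\<theta>'. indicator {\<theta>'. p (run p \<theta>' j) (restr (run p \<theta>' j) \<theta>') = i} \<theta>' *
            ennreal (f (sup (restr S \<theta>) (restr (run p \<theta>' (Suc j) \<union> S) \<theta>')) - f (sup (restr S \<theta>) (restr (run p \<theta>' j \<union> S) \<theta>'))) \<partial>Theta D)
     \<le> Delta D f i (restr S \<theta>) * emeasure (Theta D) {\<theta>'. p (run p \<theta>' j) (restr (run p \<theta>' j) \<theta>') = i}"
proof -
  define ij where "ij \<theta>' = p (run p \<theta>' j) (restr (run p \<theta>' j) \<theta>')" for \<theta>'
  define E where "E = {\<theta>'. ij \<theta>' = i}"
  define X where "X \<theta>' = sup (restr S \<theta>) (restr (run p \<theta>' j \<union> S) \<theta>')" for \<theta>'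
  define G where "G \<theta>' = indicator E \<theta>' * ennreal (f (sup (restr S \<theta>) (restr (run p \<theta>' (Suc j) \<union> S) \<theta>')) - f (X \<theta>'))" for \<theta>'
  define \<Delta>0 where "\<Delta>0 = Delta D f i (restr S \<theta>)"
  define H where "H \<theta>' = \<Delta>0 * indicator E \<theta>'" for \<theta>'
  interpret product_sigma_finite D by (rule psf)
  have Ts: "PiM (insert i (UNIV - {i})) D = Theta D" by (simp add: Theta_def)
  have ij_m: "ij \<in> measurable (PiM UNIV (\<lambda>_. borel)) (count_space UNIV)"
    unfolding ij_def by (rule ij_meas[OF p_meas])
  have E_s: "E \<in> sets (PiM UNIV (\<lambda>_. borel))"
  proof -
    have "ij -` {i} \<inter> space (PiM UNIV (\<lambda>_. borel)) \<in> sets (PiM UNIV (\<lambda>_. borel))"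
      by (rule measurable_sets[OF ij_m]) simp
    moreover have "ij -` {i} \<inter> space (PiM UNIV (\<lambda>_. borel :: real measure)) = E"
      by (auto simp: E_def space_PiM)
    ultimately show ?thesis by simp
  qed
  have F1[measurable]: "(\<lambda>\<theta>'. f (sup (restr S \<theta>) (restr (run p \<theta>' (Suc j) \<union> S) \<theta>'))) \<in> borel_measurable (PiM UNIV (\<lambda>_. borel))"
    by (rule X_meas[OF p_meas f_meas])
  have F0[measurable]: "X \<in> borel_measurable (PiM UNIV (\<lambda>_. borel)) \<Longrightarrow> True" by simp
  have F0': "(\<lambda>\<theta>'. f (X \<theta>')) \<in> borel_measurable (PiM UNIV (\<lambda>_. borel))"
    unfolding X_def by (rule X_meas[OF p_meas f_meas])
  have G_m: "G \<in> borel_measurable (Theta D)"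
    unfolding Theta_meas_cong G_def
    using E_s F0' by measurable
  have H_m: "H \<in> borel_measurable (Theta D)"
    unfolding Theta_meas_cong H_def
    using E_s by measurable
  have "integral\<^sup>N (Theta D) G = (\<integral>\<^sup>+ x. (\<integral>\<^sup>+ y. G (x(i := y)) \<partial>(D i)) \<partial>(PiM (UNIV - {i}) D))"
    using product_nn_integral_insert[of "UNIV - {i}" i G] G_m unfolding Ts by simp
  also have "\<dots> \<le> (\<integral>\<^sup>+ x. (\<integral>\<^sup>+ y. H (x(i := y)) \<partial>(D i)) \<partial>(PiM (UNIV - {i}) D))"
  proof (rule nn_integral_mono)
    fix x :: "'n \<Rightarrow> real"
    show "(\<integral>\<^sup>+ y. G (x(i := y)) \<partial>(D i)) \<le> (\<integral>\<^sup>+ y. H (x(i := y)) \<partial>(D i))"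
    proof (cases "ij x = i")
      case True
      have nr: "i \<notin> run p x j" using run_new[OF adm j, of x] True unfolding ij_def by simp
      have Xi: "X x i = 0" using nr i by (simp add: X_def restr_def sup_fun_def sup_max)
      have X0: "\<forall>l. restr S \<theta> l \<le> X x l" by (simp add: X_def sup_fun_def)
      have th0: "\<forall>l. 0 \<le> restr S \<theta> l" using th by (simp add: restr_def)
      have G_eq: "G (x(i := y)) = ennreal (f ((X x)(i := max 0 y)) - f (X x))" for y
      proof -
        have r: "run p (x(i := y)) j = run p x j" by (rule run_upd[OF nr])
        have ij': "ij (x(i := y)) = i" using ij_upd[OF nr, of y] True unfolding ij_def by simp
        have r1: "run p (x(i := y)) (Suc j) = insert i (run p x j)"
          using ij' r unfolding ij_def by (simp del: fun_upd_apply)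
        have e1: "sup (restr S \<theta>) (restr (run p (x(i := y)) (Suc j) \<union> S) (x(i := y))) = (X x)(i := max 0 y)"
          unfolding r1 using nr i by (auto simp: X_def restr_def sup_fun_def sup_max intro!: ext)
        have e2: "X (x(i := y)) = X x"
          unfolding X_def r using nr i by (auto simp: restr_def intro!: ext)
        show ?thesis unfolding G_def e1 e2 using ij' by (simp add: E_def)
      qed
      have H_eq: "H (x(i := y)) = \<Delta>0" for y
        using ij_upd[OF nr, of y] True unfolding H_def E_def ij_def by simp
      have "(\<integral>\<^sup>+ y. G (x(i := y)) \<partial>(D i)) = (\<integral>\<^sup>+ y. ennreal (f ((X x)(i := max 0 y)) - f (X x)) \<partial>(D i))"
        using G_eq by simp
      also have "\<dots> \<le> (\<integral>\<^sup>+ y. ennreal (f (sup (restr S \<theta>) (\<lambda>l. if l = i then y else 0)) - f (restr S \<theta>)) \<partial>(D i))"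
      proof (rule nn_integral_mono)
        fix y
        have s: "sup (restr S \<theta>) (\<lambda>l. if l = i then y else 0) = (restr S \<theta>)(i := max 0 y)"
          using th i by (auto simp: restr_def sup_fun_def sup_max max_def intro!: ext) (meson order.antisym)+
        have "f ((X x)(i := max 0 y)) - f (X x) \<le> f ((restr S \<theta>)(i := max 0 y)) - f (restr S \<theta>)"
          by (rule delta_anti[OF th0 X0]) (use i Xi in \<open>auto simp: restr_def\<close>)
        then show "ennreal (f ((X x)(i := max 0 y)) - f (X x)) \<le> ennreal (f (sup (restr S \<theta>) (\<lambda>l. if l = i then y else 0)) - f (restr S \<theta>))"
          unfolding s by (rule ennreal_leI)
      qed
      also have "\<dots> = \<Delta>0" unfolding \<Delta>0_def Delta_def ..
      also have "\<dots> = (\<integral>\<^sup>+ y. H (x(i := y)) \<partial>(D i))"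
        using H_eq prob_space.emeasure_space_1[OF prob] by simp
      finally show ?thesis .
    next
      case False
      have "G (x(i := y)) = 0" for y
      proof -
        have "ij (x(i := y)) \<noteq> i"
        proof
          assume a: "ij (x(i := y)) = i"
          have nr: "i \<notin> run p (x(i := y)) j" using run_new[OF adm j, of "x(i := y)"] a unfolding ij_def by simp
          have "ij ((x(i := y))(i := x i)) = ij (x(i := y))"
            using ij_upd[OF nr, of "x i"] unfolding ij_def by simp
          then show False using a False by simp
        qed
        then show ?thesis by (simp add: G_def E_def)
      qed
      then show ?thesis by simp
    qed
  qed
  also have "\<dots> = integral\<^sup>N (Theta D) H"
    using product_nn_integral_insert[of "UNIV - {i}" i H] H_m unfolding Ts by simp
  also have "\<dots> = \<Delta>0 * emeasure (Theta D) E"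
  proof -
    have ET: "E \<in> sets (Theta D)" using E_s sets_T by simp
    show ?thesis unfolding H_def by (rule nn_integral_cmult_indicator[OF ET])
  qed
  finally show ?thesis unfolding G_def X_def \<Delta>0_def E_def ij_def .
qed

lemma E_sets: "{\<theta>'. p (run p \<theta>' j) (restr (run p \<theta>' j) \<theta>') = i} \<in> sets (Theta D)"
proof -
  let ?ij = "\<lambda>\<theta>'. p (run p \<theta>' j) (restr (run p \<theta>' j) \<theta>')"
  have "?ij -` {i} \<inter> space (PiM UNIV (\<lambda>_. borel)) \<in> sets (PiM UNIV (\<lambda>_. borel))"
    by (rule measurable_sets[OF ij_meas[OF p_meas]]) simp
  moreover have "?ij -` {i} \<inter> space (PiM UNIV (\<lambda>_. borel :: real measure)) = {\<theta>'. ?ij \<theta>' = i}"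
    by (auto simp: space_PiM)
  ultimately show ?thesis using sets_T by simp
qed

lemma F_meas: "(\<lambda>\<theta>'. f (sup (restr S \<theta>) (restr (run p \<theta>' j \<union> S) \<theta>'))) \<in> borel_measurable (Theta D)"
  unfolding Theta_meas_cong by (rule X_meas[OF p_meas f_meas])

lemma ennreal_split: "ennreal x \<le> ennreal y + ennreal (x - y)"
proof (cases "x \<le> y")
  case True
  then have "ennreal x \<le> ennreal y" by (rule ennreal_leI)
  then show ?thesis by (simp add: add_increasing2)
next
  case False
  show ?thesis
  proof (cases "0 \<le> y")
    case True
    then have "ennreal x = ennreal y + ennreal (x - y)" using False
      by (subst ennreal_plus[symmetric]) auto
    then show ?thesis by simp
  next
    case f2: False
    have "ennreal x \<le> ennreal (x - y)" using f2 by (intro ennreal_leI) simp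
    then show ?thesis by (simp add: add_increasing)
  qed
qed

lemma induct_bound:
  assumes th: "\<forall>l. 0 \<le> \<theta> l"
  shows "j \<le> k \<Longrightarrow> (\<integral>\<^sup>+\<theta>'. ennreal (f (sup (restr S \<theta>) (restr (run p \<theta>' j \<union> S) \<theta>'))) \<partial>Theta D)
     \<le> (\<integral>\<^sup>+\<theta>'. ennreal (f (sup (restr S \<theta>) (restr S \<theta>'))) \<partial>Theta D) +
       (\<Sum>i\<in>UNIV - S. Delta D f i (restr S \<theta>) * (\<Sum>j'<j. emeasure (Theta D) {\<theta>'. p (run p \<theta>' j') (restr (run p \<theta>' j') \<theta>') = i}))"
proof (induction j)
  case 0
  then show ?case by simp
next
  case (Suc j)
  then have j: "j < k" by simp
  define F where "F j \<theta>' = f (sup (restr S \<theta>) (restr (run p \<theta>' j \<union> S) \<theta>'))" for j \<theta>'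
  define E where "E i = {\<theta>'. p (run p \<theta>' j) (restr (run p \<theta>' j) \<theta>') = i}" for i
  define m where "m j' i = emeasure (Theta D) {\<theta>'. p (run p \<theta>' j') (restr (run p \<theta>' j') \<theta>') = i}" for j' i
  define G where "G i \<theta>' = indicator (E i) \<theta>' * ennreal (F (Suc j) \<theta>' - F j \<theta>')" for i \<theta>'
  have Fm[measurable]: "F j' \<in> borel_measurable (Theta D)" for j'
    unfolding F_def by (rule F_meas)
  have Em[measurable]: "E i \<in> sets (Theta D)" for i
    unfolding E_def by (rule E_sets)
  have Gm: "G i \<in> borel_measurable (Theta D)" for i
    unfolding G_def by measurable
  have pw: "ennreal (F (Suc j) \<theta>') \<le> ennreal (F j \<theta>') + (\<Sum>i\<in>UNIV - S. G i \<theta>')" for \<theta>'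
  proof -
    define a where "a = p (run p \<theta>' j) (restr (run p \<theta>' j) \<theta>')"
    have sum_eq: "(\<Sum>i\<in>UNIV - S. G i \<theta>') = (if a \<in> S then 0 else ennreal (F (Suc j) \<theta>' - F j \<theta>'))"
    proof -
      have "(\<Sum>i\<in>UNIV - S. G i \<theta>') = (\<Sum>i\<in>UNIV - S. if a = i then ennreal (F (Suc j) \<theta>' - F j \<theta>') else 0)"
        by (rule sum.cong) (auto simp: G_def E_def a_def indicator_def)
      also have "\<dots> = (if a \<in> S then 0 else ennreal (F (Suc j) \<theta>' - F j \<theta>'))"
        by (simp add: sum.delta)
      finally show ?thesis .
    qed
    show ?thesis
    proof (cases "a \<in> S")
      case True
      then have "run p \<theta>' (Suc j) \<union> S = run p \<theta>' j \<union> S" by (auto simp: a_def)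
      then have "F (Suc j) \<theta>' = F j \<theta>'" by (simp add: F_def)
      then show ?thesis by simp
    next
      case False
      then show ?thesis unfolding sum_eq using ennreal_split by simp
    qed
  qed
  have "(\<integral>\<^sup>+\<theta>'. ennreal (F (Suc j) \<theta>') \<partial>Theta D) \<le> (\<integral>\<^sup>+\<theta>'. ennreal (F j \<theta>') + (\<Sum>i\<in>UNIV - S. G i \<theta>') \<partial>Theta D)"
    by (rule nn_integral_mono) (rule pw)
  also have "\<dots> = (\<integral>\<^sup>+\<theta>'. ennreal (F j \<theta>') \<partial>Theta D) + (\<Sum>i\<in>UNIV - S. (\<integral>\<^sup>+\<theta>'. G i \<theta>' \<partial>Theta D))"
    using Gm by (subst nn_integral_add) (auto simp: nn_integral_sum)
  also have "\<dots> \<le> (\<integral>\<^sup>+\<theta>'. ennreal (F j \<theta>') \<partial>Theta D) + (\<Sum>i\<in>UNIV - S. Delta D f i (restr S \<theta>) * m j i)"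
  proof (intro add_left_mono sum_mono)
    fix i assume "i \<in> UNIV - S"
    then show "(\<integral>\<^sup>+\<theta>'. G i \<theta>' \<partial>Theta D) \<le> Delta D f i (restr S \<theta>) * m j i"
      unfolding G_def E_def F_def m_def using key_step[OF th j] by simp
  qed
  also have "\<dots> \<le> (\<integral>\<^sup>+\<theta>'. ennreal (f (sup (restr S \<theta>) (restr S \<theta>'))) \<partial>Theta D) +
       (\<Sum>i\<in>UNIV - S. Delta D f i (restr S \<theta>) * (\<Sum>j'<j. m j' i)) + (\<Sum>i\<in>UNIV - S. Delta D f i (restr S \<theta>) * m j i)"
    unfolding F_def m_def by (intro add_right_mono Suc.IH) (use j in simp)
  also have "\<dots> = (\<integral>\<^sup>+\<theta>'. ennreal (f (sup (restr S \<theta>) (restr S \<theta>'))) \<partial>Theta D) +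
       (\<Sum>i\<in>UNIV - S. Delta D f i (restr S \<theta>) * (\<Sum>j'<Suc j. m j' i))"
    by (simp add: add.assoc sum.distrib[symmetric] distrib_left)
  finally show ?case unfolding F_def m_def .
qed

lemma sum_ind: "k' \<le> k \<Longrightarrow> (\<Sum>j<k'. indicator {\<theta>'. p (run p \<theta>' j) (restr (run p \<theta>' j) \<theta>') = i} \<theta>' :: ennreal)
   = indicator {\<theta>'. i \<in> run p \<theta>' k'} \<theta>'"
proof (induction k')
  case 0 then show ?case by simp
next
  case (Suc k')
  then have kk: "k' < k" by simp
  have nr: "p (run p \<theta>' k') (restr (run p \<theta>' k') \<theta>') \<notin> run p \<theta>' k'" by (rule run_new[OF adm kk])
  show ?case using Suc nr by (auto simp: indicator_def)
qed

lemma run_sets: "{\<theta>'. i \<in> run p \<theta>' j} \<in> sets (Theta D)"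
proof -
  have "(\<lambda>\<theta>'. run p \<theta>' j) -` {U. i \<in> U} \<inter> space (PiM UNIV (\<lambda>_. borel)) \<in> sets (PiM UNIV (\<lambda>_. borel))"
    by (rule measurable_sets[OF run_meas[OF p_meas]]) simp
  moreover have "(\<lambda>\<theta>'. run p \<theta>' j) -` {U. i \<in> U} \<inter> space (PiM UNIV (\<lambda>_. borel :: real measure)) = {\<theta>'. i \<in> run p \<theta>' j}"
    by (auto simp: space_PiM)
  ultimately show ?thesis using sets_T by simp
qed

lemma sel_eq: "(\<Sum>j<k. emeasure (Theta D) {\<theta>'. p (run p \<theta>' j) (restr (run p \<theta>' j) \<theta>') = i}) = sel_prob D k p i"
proof -
  have "(\<Sum>j<k. emeasure (Theta D) {\<theta>'. p (run p \<theta>' j) (restr (run p \<theta>' j) \<theta>') = i})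
     = (\<Sum>j<k. \<integral>\<^sup>+\<theta>'. indicator {\<theta>'. p (run p \<theta>' j) (restr (run p \<theta>' j) \<theta>') = i} \<theta>' \<partial>Theta D)"
    using E_sets by (simp add: nn_integral_indicator)
  also have "\<dots> = (\<integral>\<^sup>+\<theta>'. (\<Sum>j<k. indicator {\<theta>'. p (run p \<theta>' j) (restr (run p \<theta>' j) \<theta>') = i} \<theta>') \<partial>Theta D)"
    using E_sets by (intro nn_integral_sum[symmetric]) auto
  also have "\<dots> = (\<integral>\<^sup>+\<theta>'. indicator {\<theta>'. i \<in> run p \<theta>' k} \<theta>' \<partial>Theta D)"
    using sum_ind[of k] by simp
  also have "\<dots> = emeasure (Theta D) {\<theta>'. i \<in> run p \<theta>' k}"
    using run_sets by (simp add: nn_integral_indicator)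
  also have "\<dots> = sel_prob D k p i"
    unfolding sel_prob_def space_T by simp
  finally show ?thesis .
qed

lemma probT: "prob_space (Theta D)"
  unfolding Theta_def by (rule prob_space_PiM) (rule prob)

lemma A_meas: "(\<lambda>\<theta>. \<integral>\<^sup>+\<theta>'. ennreal (f (sup (restr S \<theta>) (restr S \<theta>'))) \<partial>Theta D) \<in> borel_measurable (Theta D)"
proof -
  interpret T: sigma_finite_measure "Theta D" by (rule prob_space_imp_sigma_finite[OF probT])
  have ps: "sets (Theta D \<Otimes>\<^sub>M Theta D) = sets (PiM UNIV (\<lambda>_. borel) \<Otimes>\<^sub>M PiM UNIV (\<lambda>_. borel))"
    by (rule sets_pair_measure_cong) (rule sets_T)+
  have "(\<lambda>z. f (sup (restr S (fst z)) (restr S (snd z)))) \<in> borel_measurable (PiM UNIV (\<lambda>_. borel) \<Otimes>\<^sub>M PiM UNIV (\<lambda>_. borel))"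
    using measurable_comp[OF vec_meas1 f_meas] by (simp add: comp_def)
  then have "(\<lambda>z. ennreal (f (sup (restr S (fst z)) (restr S (snd z))))) \<in> borel_measurable (Theta D \<Otimes>\<^sub>M Theta D)"
    unfolding measurable_cong_sets[OF ps refl] by measurable
  then show ?thesis
    by (intro T.borel_measurable_nn_integral) (simp add: case_prod_beta')
qed

lemma Delta_meas: "(\<lambda>\<theta>. Delta D f i (restr S \<theta>)) \<in> borel_measurable (Theta D)"
proof -
  interpret Di: sigma_finite_measure "D i" by (rule prob_space_imp_sigma_finite[OF prob])
  have ps: "sets (Theta D \<Otimes>\<^sub>M D i) = sets (PiM UNIV (\<lambda>_. borel) \<Otimes>\<^sub>M borel)"
    by (rule sets_pair_measure_cong) (rule sets_T, rule sets_D)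
  have m1: "(\<lambda>z. f (sup (restr S (fst z)) (\<lambda>l. if l = i then snd z else 0))) \<in> borel_measurable (PiM UNIV (\<lambda>_. borel) \<Otimes>\<^sub>M borel)"
    using measurable_comp[OF vec_meas2 f_meas] by (simp add: comp_def)
  have m2: "(\<lambda>z. f (restr S (fst z))) \<in> borel_measurable (PiM UNIV (\<lambda>_. borel) \<Otimes>\<^sub>M (borel :: real measure))"
    using measurable_comp[OF measurable_comp[OF measurable_fst restr_meas] f_meas] by (simp add: comp_def)
  have "(\<lambda>z. ennreal (f (sup (restr S (fst z)) (\<lambda>l. if l = i then snd z else 0)) - f (restr S (fst z)))) \<in> borel_measurable (Theta D \<Otimes>\<^sub>M D i)"
    unfolding measurable_cong_sets[OF ps refl] using m1 m2 by measurable
  then show ?thesis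
    unfolding Delta_def by (intro Di.borel_measurable_nn_integral) (simp add: case_prod_beta')
qed

end

theorem lemma3:
  fixes D :: "'n::finite \<Rightarrow> real measure"
    and f :: "('n \<Rightarrow> real) \<Rightarrow> real"
    and k :: nat
    and p :: "'n set \<Rightarrow> ('n \<Rightarrow> real) \<Rightarrow> 'n"
    and S :: "'n set"
  assumes prob: "\<And>i. prob_space (D i)"
    and sets_D: "\<And>i. sets (D i) = sets borel"
    and nonneg_D: "\<And>i. AE t in D i. 0 \<le> t"
    and f_meas: "f \<in> borel_measurable (PiM UNIV (\<lambda>_. borel))"
    and f_nonneg: "\<And>x. (\<forall>i. 0 \<le> x i) \<Longrightarrow> 0 \<le> f x"
    and f_mono: "\<And>x y. (\<forall>i. 0 \<le> x i) \<Longrightarrow> (\<forall>i. x i \<le> y i) \<Longrightarrow> f x \<le> f y"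
    and f_submod: "\<And>x y. (\<forall>i. 0 \<le> x i) \<Longrightarrow> (\<forall>i. 0 \<le> y i) \<Longrightarrow>
                      f (sup x y) + f (inf x y) \<le> f x + f y"
    and k_pos: "1 \<le> k" and k_le: "k \<le> CARD('n)"
    and opt: "optimal_policy D f k p"
  shows "(\<integral>\<^sup>+ \<theta>. \<integral>\<^sup>+ \<theta>'. ennreal (f (sup (restr S \<theta>) (restr (run p \<theta>' k \<union> S) \<theta>')))
             \<partial>Theta D \<partial>Theta D)
         \<le> (\<integral>\<^sup>+ \<theta>. \<integral>\<^sup>+ \<theta>'. ennreal (f (sup (restr S \<theta>) (restr S \<theta>'))) \<partial>Theta D \<partial>Theta D)
           + (\<Sum>i\<in>UNIV - S. sel_prob D k p i * (\<integral>\<^sup>+ \<theta>. Delta D f i (restr S \<theta>) \<partial>Theta D))"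
proof -
  have adm: "admissible_policy k p" using opt unfolding optimal_policy_def by simp
  have fs: "\<forall>x y. (\<forall>i. 0 \<le> x i) \<longrightarrow> (\<forall>i. 0 \<le> y i) \<longrightarrow> f (sup x y) + f (inf x y) \<le> f x + f y"
    using f_submod by blast
  note L = induct_bound[where D=D and f=f and k=k and p=p and S=S, OF prob sets_D f_meas fs adm]
  note SE = sel_eq[where D=D and f=f and k=k and p=p, OF prob sets_D f_meas fs adm]
  note AM = A_meas[where D=D and f=f and k=k and p=p and S=S, OF prob sets_D f_meas fs adm]
  note DM = Delta_meas[where D=D and f=f and k=k and p=p and S=S, OF prob sets_D f_meas fs adm]
  have AE0: "AE \<theta> in Theta D. \<forall>l\<in>UNIV. 0 \<le> \<theta> l"
    unfolding Theta_def
    by (intro AE_finite_allI AE_PiM_component[where M=D] prob nonneg_D) auto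
  have "(\<integral>\<^sup>+ \<theta>. \<integral>\<^sup>+ \<theta>'. ennreal (f (sup (restr S \<theta>) (restr (run p \<theta>' k \<union> S) \<theta>'))) \<partial>Theta D \<partial>Theta D)
     \<le> (\<integral>\<^sup>+ \<theta>. (\<integral>\<^sup>+ \<theta>'. ennreal (f (sup (restr S \<theta>) (restr S \<theta>'))) \<partial>Theta D) +
          (\<Sum>i\<in>UNIV - S. Delta D f i (restr S \<theta>) * sel_prob D k p i) \<partial>Theta D)"
  proof (rule nn_integral_mono_AE)
    show "AE \<theta> in Theta D. (\<integral>\<^sup>+ \<theta>'. ennreal (f (sup (restr S \<theta>) (restr (run p \<theta>' k \<union> S) \<theta>'))) \<partial>Theta D)
       \<le> (\<integral>\<^sup>+ \<theta>'. ennreal (f (sup (restr S \<theta>) (restr S \<theta>'))) \<partial>Theta D) +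
          (\<Sum>i\<in>UNIV - S. Delta D f i (restr S \<theta>) * sel_prob D k p i)"
      using AE0
    proof eventually_elim
      case (elim \<theta>)
      then have th: "\<forall>l. 0 \<le> \<theta> l" by simp
      show ?case using L[OF th, of k] by (simp add: SE)
    qed
  qed
  also have "\<dots> = (\<integral>\<^sup>+ \<theta>. \<integral>\<^sup>+ \<theta>'. ennreal (f (sup (restr S \<theta>) (restr S \<theta>'))) \<partial>Theta D \<partial>Theta D)
           + (\<Sum>i\<in>UNIV - S. (\<integral>\<^sup>+ \<theta>. Delta D f i (restr S \<theta>) * sel_prob D k p i \<partial>Theta D))"
    using AM DM by (subst nn_integral_add) (auto simp: nn_integral_sum)
  also have "\<dots> = (\<integral>\<^sup>+ \<theta>. \<integral>\<^sup>+ \<theta>'. ennreal (f (sup (restr S \<theta>) (restr S \<theta>'))) \<partial>Theta D \<partial>Theta D)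
           + (\<Sum>i\<in>UNIV - S. sel_prob D k p i * (\<integral>\<^sup>+ \<theta>. Delta D f i (restr S \<theta>) \<partial>Theta D))"
  proof -
    have "(\<integral>\<^sup>+ \<theta>. Delta D f i (restr S \<theta>) * sel_prob D k p i \<partial>Theta D) = sel_prob D k p i * (\<integral>\<^sup>+ \<theta>. Delta D f i (restr S \<theta>) \<partial>Theta D)" for i
      using nn_integral_multc[OF DM[of i], of "sel_prob D k p i"] by (simp add: mult.commute)
    then show ?thesis by simp
  qed
  finally show ?thesis .
qed

end
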